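(* A positive integer $m$ does not occur in the sequence $(a(n))_{n\ge 0}$ if and only if $m=\lfloor \varphi^2 k+\tfrac12\rfloor$ for some integer $k\ge 1$.
   Context: $\varphi=(1+\sqrt5)/2$. Let $(F_n)_{n\ge 0}$ be the Fibonacci numbers: $F_0=0$, $F_1=1$, $F_n=F_{n-1}+F_{n-2}$ for $n\ge 2$. Define $(a(n))_{n\ge 0}$ (OEIS A105774) by $a(0)=0$, $a(1)=1$, and for $n\ge 2$, $a(n)=F_{j+1}-a(n-F_j)$, where $j\ge 2$ is the unique index with $F_j<n\le F_{j+1}$. *)

theory Defs
  imports Complex_Main "HOL-Number_Theory.Fib"
begin

definition phi :: real where "phi = (1 + sqrt 5) / 2"

text \<open>For n \<ge> 2, fidx n is the unique j \<ge> 2 with fib j < n \<le> fib (j+1).\<close>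
definition fidx :: "nat \<Rightarrow> nat" where
  "fidx n = Suc (Suc (THE i. fib (Suc (Suc i)) < n \<and> n \<le> fib (Suc (Suc (Suc i)))))"

lemma fib_pos_ge1: "j \<ge> 1 \<Longrightarrow> fib j \<ge> 1"
  using fib_neq_0_nat[of j] by simp

function A105774 :: "nat \<Rightarrow> nat" where
  "A105774 n = (if n = 0 then 0 else if n = 1 then 1
     else fib (Suc (fidx n)) - A105774 (n - fib (fidx n)))"
  by auto
termination
proof (relation "measure id")
  fix n :: nat
  assume "\<not> n = 0" "n \<noteq> 1"
  show "(n - fib (fidx n), n) \<in> measure id"
    using \<open>\<not> n = 0\<close> fib_pos_ge1[of "fidx n"] by (simp add: fidx_def)
qed simp

end

theory Submission
  imports Defs
begin


definition psi :: real where "psi = 1 - phi"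

lemma s5: "sqrt 5 * sqrt 5 = (5::real)" by simp
lemma s5_lo: "2236/1000 < sqrt (5::real)" by (rule real_less_rsqrt) (simp add: power2_eq_square)
lemma s5_hi: "sqrt (5::real) < 22361/10000" by (rule real_less_lsqrt) (simp_all add: power2_eq_square)

lemma phi_sq: "phi^2 = phi + 1"
  unfolding phi_def by (simp add: power2_eq_square field_simps)
lemma psi_sq: "psi^2 = psi + 1"
  unfolding psi_def phi_def by (simp add: power2_eq_square field_simps)
lemma phi_psi: "phi * psi = -1"
  unfolding psi_def phi_def by (simp add: field_simps)
lemma phi_minus_psi: "phi - psi = sqrt 5"
  unfolding psi_def phi_def by (simp add: field_simps)
lemma phi_bounds: "1618/1000 < phi" "phi < 161805/100000"
  unfolding phi_def using s5_lo s5_hi by simp_all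
lemma psi_bounds: "-61805/100000 < psi" "psi < -618/1000"
  unfolding psi_def using phi_bounds by simp_all

lemma phi_pow: "phi^(Suc n) = fib n + fib (Suc n) * phi"
proof (induction n rule: fib.induct)
  case 1 then show ?case by simp
next
  case 2 then show ?case by (simp add: phi_sq[unfolded power2_eq_square])
next
  case (3 n)
  have "phi^(Suc (Suc (Suc n))) = phi^Suc n * phi^2" by (simp add: power2_eq_square)
  also have "\<dots> = phi^Suc n + phi^(Suc (Suc n))" by (simp add: phi_sq algebra_simps)
  finally show ?case using 3 by (simp add: algebra_simps)
qed

lemma psi_pow: "psi^(Suc n) = fib n + fib (Suc n) * psi"
proof (induction n rule: fib.induct)
  case 1 then show ?case by simp
next
  case 2 then show ?case by (simp add: psi_sq[unfolded power2_eq_square])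
next
  case (3 n)
  have "psi^(Suc (Suc (Suc n))) = psi^Suc n * psi^2" by (simp add: power2_eq_square)
  also have "\<dots> = psi^Suc n + psi^(Suc (Suc n))" by (simp add: psi_sq algebra_simps)
  finally show ?case using 3 by (simp add: algebra_simps)
qed

lemma binet: "real (fib n) * sqrt 5 = phi^n - psi^n"
  using fib_closed_form[of n] unfolding phi_def psi_def by (simp add: field_simps)

lemma fib_shift: "real (fib (n+2)) = phi^2 * fib n + psi^n"
proof -
  have d: "phi^2 - psi^2 = sqrt 5" using phi_minus_psi phi_sq psi_sq by simp
  have b2: "real (fib (n+2)) * sqrt 5 = phi^n*phi^2 - psi^n*psi^2"
    using binet[of "n+2"] by (simp add: power_add power2_eq_square algebra_simps)
  have "(phi^2 * fib n + psi^n) * sqrt 5 = phi^2 * (real (fib n) * sqrt 5) + psi^n * sqrt 5"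
    by (simp add: algebra_simps)
  also have "\<dots> = phi^2 * (phi^n - psi^n) + psi^n * (phi^2 - psi^2)" using binet[of n] d by simp
  also have "\<dots> = phi^n*phi^2 - psi^n*psi^2" by (simp add: algebra_simps)
  finally have "real (fib (n+2)) * sqrt 5 = (phi^2 * fib n + psi^n) * sqrt 5" using b2 by simp
  then show ?thesis by simp
qed

lemma abs_psi_pow_phi_pow: "\<bar>psi\<bar>^n * phi^n = 1"
proof -
  have "\<bar>psi\<bar> * phi = 1" using phi_psi phi_bounds psi_bounds by (simp add: abs_if algebra_simps)
  then show ?thesis by (metis power_mult_distrib power_one)
qed

lemma L4: assumes "n \<ge> 1" shows "(2 * real (fib n) - 1) * \<bar>psi\<bar>^n < 1"
proof -
  define u where "u = \<bar>psi\<bar>^n"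
  have u0: "0 < u" unfolding u_def using psi_bounds by simp
  have "\<bar>psi\<bar>^n \<le> \<bar>psi\<bar>^1" using assms psi_bounds by (intro power_decreasing) auto
  hence u1: "u < 61805/100000" unfolding u_def using psi_bounds by simp
  have pu: "phi^n * u = 1" using abs_psi_pow_phi_pow u_def by (simp add: mult.commute)
  have "\<bar>psi^n\<bar> = u" unfolding u_def by (simp add: power_abs)
  hence "real (fib n) * sqrt 5 \<le> phi^n + u" using binet[of n] by linarith
  hence "real (fib n) * sqrt 5 * u \<le> phi^n * u + u*u" using u0 by (metis distrib_right mult_right_mono less_imp_le)
  hence A: "real (fib n) * u * sqrt 5 \<le> 1 + u*u" using pu by (simp add: algebra_simps)
  have "u*u \<le> 61805/100000 * u" using u0 u1 by simp
  hence "real (fib n) * u * sqrt 5 \<le> 1 + 61805/100000*u" using A by linarith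
  hence A2: "real (fib n) * u * (2236/1000) \<le> 1 + 61805/100000*u" using s5_lo u0
    by (smt (verit) mult_left_mono of_nat_0_le_iff zero_le_mult_iff)
  have key: "\<And>W::real. W*(2236/1000) \<le> 1 + 61805/100000*u \<Longrightarrow> 2*W \<le> 9/10+6/10*u" using u0 by linarith
  have "2 * (real (fib n) * u) \<le> 9/10 + 6/10*u" using key[OF A2] .
  then show ?thesis unfolding u_def[symmetric] using u0 u1 by (simp add: algebra_simps)
qed

lemma not_odd_eq: fixes k q :: int assumes "odd q" shows "2 * real_of_int k * phi^2 \<noteq> q"
proof
  assume h: "2 * real_of_int k * phi^2 = q"
  have "2 * real_of_int k * phi^2 = 3*k + k * sqrt 5" unfolding phi_sq by (simp add: phi_def field_simps)
  hence e: "k * sqrt 5 = q - 3*k" using h by simp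
  hence "(k * sqrt 5)^2 = (q - 3*k)^2" by simp
  hence "real_of_int (5*k^2) = real_of_int ((q-3*k)^2)" by (simp add: power_mult_distrib)
  hence e2: "5*k^2 = (q-3*k)^2" by linarith
  show False
  proof (cases "even k")
    case True
    then have "even (5*k^2)" by simp
    moreover have "odd ((q-3*k)^2)" using True assms by simp
    ultimately show False using e2 by simp
  next
    case False
    then have "odd (5*k^2)" by simp
    moreover have "even ((q-3*k)^2)" using False assms by simp
    ultimately show False using e2 by simp
  qed
qed

lemma unit_lemma:
  fixes c d :: int
  assumes a1: "\<bar>c + d*phi\<bar> \<le> 2" and a2: "\<bar>c + d*psi\<bar> < 1"
    and a3: "(c + d*phi) * (c + d*psi) \<ge> 0" and a4: "c + d*psi \<noteq> 0"
  shows False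
proof -
  have "d * sqrt 5 = (c + d*phi) - (c + d*psi)" by (simp add: phi_minus_psi[symmetric] algebra_simps)
  hence h3: "\<bar>real_of_int d\<bar> * sqrt 5 < 3" using a1 a2 by (simp add: abs_mult)
  have "\<bar>real_of_int d\<bar> * 2 \<le> \<bar>real_of_int d\<bar> * sqrt 5"
    by (rule mult_left_mono) (use s5_lo in auto)
  hence "\<bar>real_of_int d\<bar> * 2 < 3" using h3 by linarith
  hence "\<bar>d\<bar> \<le> 1" by linarith
  hence "d = 0 \<or> d = 1 \<or> d = -1" by linarith
  then show False
  proof (elim disjE)
    assume "d = 0" then show False using a2 a4 by simp
  next
    assume d: "d = 1"
    then have "-1 < c + psi" "c + psi < 1" using a2 by auto
    hence "c = 0 \<or> c = 1" using psi_bounds by linarith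
    then show False
    proof
      assume "c = 0" then show False using a3 d phi_psi by simp
    next
      assume "c = 1" then show False using a1 d phi_bounds by simp
    qed
  next
    assume d: "d = -1"
    then have "-1 < c - psi" "c - psi < 1" using a2 by auto
    hence "c = 0 \<or> c = -1" using psi_bounds by linarith
    then show False
    proof
      assume "c = 0" then show False using a3 d phi_psi by simp
    next
      assume "c = -1" then show False using a1 d phi_bounds by simp
    qed
  qed
qed


lemma core:
  fixes k p :: int and n :: nat
  assumes n2: "n \<ge> 2" and po: "odd p" and p1: "1 \<le> p" and pG: "p \<le> 2*int(fib n) - 1"
    and sg: "(2*k*phi^2 - p) * psi^n \<le> 0" and sm: "\<bar>2*k*phi^2 - p\<bar> \<le> 2*\<bar>psi\<bar>^n"
  shows False
proof -
  define x where "x = 2*k*phi^2 - p"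
  define x' where "x' = 2*k*psi^2 - p"
  have pp2: "phi^2 > 2618/1000" using phi_sq phi_bounds by simp
  have ps2: "psi^2 < 382/1000" "psi^2 > 0" using psi_sq psi_bounds by simp_all
  have "\<bar>psi\<bar>^n \<le> \<bar>psi\<bar>^2" using n2 psi_bounds by (intro power_decreasing) auto
  hence "\<bar>psi\<bar>^n < 382/1000" using ps2 by (simp add: power_abs)
  hence xs: "\<bar>x\<bar> < 1" using sm x_def by simp
  have k1: "k \<ge> 1"
  proof (rule ccontr)
    assume "\<not> k \<ge> 1"
    hence "real_of_int k \<le> 0" by simp
    hence "2*k*phi^2 \<le> 0" using pp2 by (simp add: mult_nonpos_nonneg)
    hence "x \<le> -1" using p1 x_def by simp
    then show False using xs by simp
  qed
  have "2*k*phi^2 < p + 1" using xs x_def by simp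
  moreover have "2*k*(2618/1000) \<le> 2*k*phi^2" using pp2 k1 by simp
  moreover have "2*k*psi^2 \<le> 2*k*(382/1000)" using ps2 k1 by simp
  ultimately have "2*k*psi^2 < p" using p1 by linarith
  hence x'neg: "x' < 0" unfolding x'_def by simp
  have x'big: "x' > - p" unfolding x'_def using ps2 k1 by simp
  define y0 where "y0 = x * phi^n"
  define y1 where "y1 = x' * psi^n"
  have "\<bar>y0\<bar> = \<bar>x\<bar> * phi^n" unfolding y0_def using phi_bounds by (simp add: abs_mult)
  also have "\<dots> \<le> 2*\<bar>psi\<bar>^n * phi^n" using sm x_def phi_bounds by (simp add: mult_right_mono)
  also have "\<dots> = 2" using abs_psi_pow_phi_pow[of n] by simp
  finally have y0b: "\<bar>y0\<bar> \<le> 2" .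
  have "\<bar>y1\<bar> = \<bar>x'\<bar> * \<bar>psi\<bar>^n" unfolding y1_def by (simp add: abs_mult power_abs)
  also have "\<dots> \<le> (2*real (fib n) - 1) * \<bar>psi\<bar>^n"
  proof (rule mult_right_mono)
    have "real_of_int p \<le> 2*real (fib n) - 1" using pG by linarith
    then show "\<bar>x'\<bar> \<le> 2*real (fib n) - 1" using x'neg x'big by linarith
  qed simp
  also have "\<dots> < 1" using L4 n2 by simp
  finally have y1b: "\<bar>y1\<bar> < 1" .
  have y1nz: "y1 \<noteq> 0" unfolding y1_def using x'neg psi_bounds by simp
  have "x * psi^n \<le> 0" using sg x_def by simp
  moreover have "x' * phi^n < 0" using x'neg phi_bounds by (simp add: mult_neg_pos)
  ultimately have "(x * psi^n) * (x' * phi^n) \<ge> 0" by (simp add: mult_nonpos_nonpos)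
  hence prod: "y0 * y1 \<ge> 0" unfolding y0_def y1_def by (simp add: algebra_simps)
  obtain m where nm: "n = Suc m" using n2 by (cases n) auto
  define f where "f = int (fib m)"
  define g where "g = int (fib (Suc m))"
  define a where "a = 2*k - p"
  define b where "b = 2*k"
  have xr: "x = a + b*phi" unfolding x_def a_def b_def using phi_sq by (simp add: algebra_simps)
  have x'r: "x' = a + b*psi" unfolding x'_def a_def b_def using psi_sq by (simp add: algebra_simps)
  have pn: "phi^n = f + g*phi" unfolding nm f_def g_def using phi_pow[of m] by simp
  have qn: "psi^n = f + g*psi" unfolding nm f_def g_def using psi_pow[of m] by simp
  define c where "c = a*f + b*g"
  define d where "d = a*g + b*f + b*g"
  have "y0 = (a + b*phi) * (f + g*phi)" unfolding y0_def xr pn ..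
  also have "\<dots> = a*f + b*g*phi^2 + (a*g+b*f)*phi" by (simp add: algebra_simps power2_eq_square)
  also have "\<dots> = c + d*phi" unfolding c_def d_def phi_sq by (simp add: algebra_simps)
  finally have y0r: "y0 = c + d*phi" .
  have "y1 = (a + b*psi) * (f + g*psi)" unfolding y1_def x'r qn ..
  also have "\<dots> = a*f + b*g*psi^2 + (a*g+b*f)*psi" by (simp add: algebra_simps power2_eq_square)
  also have "\<dots> = c + d*psi" unfolding c_def d_def psi_sq by (simp add: algebra_simps)
  finally have y1r: "y1 = c + d*psi" .
  show False using unit_lemma[of c d] y0b y1b prod y1nz unfolding y0r y1r by simp
qed


definition bset :: "nat \<Rightarrow> bool" where
  "bset m \<longleftrightarrow> (\<exists>k::nat. k \<ge> 1 \<and> int m = \<lfloor>phi ^ 2 * real k + 1/2\<rfloor>)"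

lemma near: assumes "m \<ge> 1" shows "bset m \<longleftrightarrow> (\<exists>k::int. \<bar>k*phi^2 - m\<bar> < 1/2)"
proof
  assume "bset m"
  then obtain k :: nat where k: "k \<ge> 1" "int m = \<lfloor>phi ^ 2 * real k + 1/2\<rfloor>" unfolding bset_def by blast
  have "real m \<le> phi ^ 2 * real k + 1/2" "phi ^ 2 * real k + 1/2 < real m + 1"
    using k(2) by (metis floor_correct of_int_of_nat_eq) (metis k(2) floor_correct of_int_of_nat_eq of_int_1 of_int_add)
  moreover have "2 * real_of_int (int k) * phi^2 \<noteq> real_of_int (2 * int m - 1)"
    by (rule not_odd_eq) simp
  ultimately have "real_of_int (int k)*phi^2 - m < 1/2" "-(1/2) < real_of_int (int k)*phi^2 - m"
    by (simp_all add: algebra_simps)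
  hence "\<bar>real_of_int (int k)*phi^2 - m\<bar> < 1/2" by (smt (verit))
  then show "\<exists>k::int. \<bar>k*phi^2 - m\<bar> < 1/2" by blast
next
  assume "\<exists>k::int. \<bar>k*phi^2 - m\<bar> < 1/2"
  then obtain k :: int where k: "\<bar>k*phi^2 - m\<bar> < 1/2" by blast
  have pp2: "phi^2 > 2618/1000" using phi_sq phi_bounds by simp
  have k1: "k \<ge> 1"
  proof (rule ccontr)
    assume "\<not> k \<ge> 1"
    hence "real_of_int k \<le> 0" by simp
    hence "k*phi^2 \<le> 0" using pp2 by (simp add: mult_nonpos_nonneg)
    then show False using k assms by simp
  qed
  have h: "-(1/2) < k*phi^2 - m \<and> k*phi^2 - m < 1/2" using k by (auto simp: abs_if split: if_splits)
  have rk: "real (nat k) = real_of_int k" using k1 by simp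
  have "int m = \<lfloor>phi ^ 2 * real (nat k) + 1/2\<rfloor>"
    unfolding rk using h by (intro floor_unique[symmetric]) (simp_all add: algebra_simps)
  then show "bset m" unfolding bset_def using k1 by (intro exI[of _ "nat k"]) simp
qed

lemma lin_pos: "\<not> (2*t - 1 \<le> 0 \<and> \<bar>2*t - 1\<bar> \<le> 2*\<bar>e\<bar>) \<Longrightarrow> \<not> (2*t + 1 \<le> 0 \<and> \<bar>2*t + 1\<bar> \<le> 2*\<bar>e\<bar>) \<Longrightarrow> 0 < (e::real) \<Longrightarrow> (\<bar>t\<bar> < 1/2) = (\<bar>t + e\<bar> < 1/2)"
  by (auto simp: abs_if split: if_splits)
lemma lin_neg: "\<not> (2*t - 1 \<ge> 0 \<and> \<bar>2*t - 1\<bar> \<le> 2*\<bar>e\<bar>) \<Longrightarrow> \<not> (2*t + 1 \<ge> 0 \<and> \<bar>2*t + 1\<bar> \<le> 2*\<bar>e\<bar>) \<Longrightarrow> e < (0::real) \<Longrightarrow> (\<bar>t\<bar> < 1/2) = (\<bar>t + e\<bar> < 1/2)"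
  by (auto simp: abs_if split: if_splits)

lemma refl_core:
  fixes k :: int and y n :: nat
  assumes n2: "n \<ge> 2" and y1: "1 \<le> y" and yG: "y < fib n"
  shows "\<bar>k*phi^2 - y\<bar> < 1/2 \<longleftrightarrow> \<bar>k*phi^2 - y + psi^n\<bar> < 1/2"
proof -
  define t where "t = k*phi^2 - y"
  define e where "e = psi^n"
  have ea: "\<bar>psi\<bar>^n = \<bar>e\<bar>" unfolding e_def by (simp add: power_abs)
  have enz: "e \<noteq> 0" unfolding e_def using psi_bounds by simp
  have c1: "\<not> ((2*t - 1) * e \<le> 0 \<and> \<bar>2*t - 1\<bar> \<le> 2*\<bar>e\<bar>)"
  proof
    assume h: "(2*t - 1) * e \<le> 0 \<and> \<bar>2*t - 1\<bar> \<le> 2*\<bar>e\<bar>"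
    have eq: "2*t - 1 = 2*k*phi^2 - real_of_int (2*int y+1)" unfolding t_def by simp
    from h have A: "(2*t - 1) * psi^n \<le> 0" and B: "\<bar>2*t - 1\<bar> \<le> 2*\<bar>psi\<bar>^n" using ea by (auto simp: e_def)
    show False using core[of n "2*int y+1" k, OF n2 _ _ _ A[unfolded eq] B[unfolded eq]] yG by simp
  qed
  have c2: "\<not> ((2*t + 1) * e \<le> 0 \<and> \<bar>2*t + 1\<bar> \<le> 2*\<bar>e\<bar>)"
  proof
    assume h: "(2*t + 1) * e \<le> 0 \<and> \<bar>2*t + 1\<bar> \<le> 2*\<bar>e\<bar>"
    have eq: "2*t + 1 = 2*k*phi^2 - real_of_int (2*int y-1)" unfolding t_def by simp
    from h have A: "(2*t + 1) * psi^n \<le> 0" and B: "\<bar>2*t + 1\<bar> \<le> 2*\<bar>psi\<bar>^n" using ea by (auto simp: e_def)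
    show False using core[of n "2*int y-1" k, OF n2 _ _ _ A[unfolded eq] B[unfolded eq]] yG y1 by simp
  qed
  have "\<bar>t\<bar> < 1/2 \<longleftrightarrow> \<bar>t + e\<bar> < 1/2"
  proof (cases "e > 0")
    case True
    have s1: "((2*t - 1) * e \<le> 0) = (2*t - 1 \<le> 0)" using True by (simp add: mult_le_0_iff)
    have s2: "((2*t + 1) * e \<le> 0) = (2*t + 1 \<le> 0)" using True by (simp add: mult_le_0_iff)
    show ?thesis using lin_pos[OF c1[unfolded s1] c2[unfolded s2] True] .
  next
    case False
    hence en: "e < 0" using enz by simp
    have s1: "((2*t - 1) * e \<le> 0) = (2*t - 1 \<ge> 0)" using en by (simp add: mult_le_0_iff)
    have s2: "((2*t + 1) * e \<le> 0) = (2*t + 1 \<ge> 0)" using en by (simp add: mult_le_0_iff)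
    show ?thesis using lin_neg[OF c1[unfolded s1] c2[unfolded s2] en] .
  qed
  then show ?thesis unfolding t_def e_def .
qed

lemma reflect:
  fixes y n :: nat
  assumes n2: "n \<ge> 2" and y1: "1 \<le> y" and yG: "y < fib n"
  shows "bset (fib (n+2) - y) \<longleftrightarrow> bset y"
proof -
  have Fge: "fib n \<le> fib (n+2)" by (rule fib_mono) simp
  have F: "real (fib (n+2)) = phi^2 * fib n + psi^n" by (rule fib_shift)
  have Fy: "real (fib (n+2) - y) = phi^2 * fib n + psi^n - y" using Fge yG F by (simp add: of_nat_diff)
  have m1: "fib (n+2) - y \<ge> 1" using Fge yG by simp
  have eq: "(int (fib n) - k)*phi^2 - real (fib (n+2) - y) = - (k*phi^2 - y + psi^n)" for k :: int
    unfolding Fy by (simp add: algebra_simps)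
  have eq2: "k'*phi^2 - real (fib (n+2) - y) = - ((int (fib n) - k')*phi^2 - y + psi^n)" for k' :: int
    unfolding Fy by (simp add: algebra_simps)
  have "(\<exists>k::int. \<bar>k*phi^2 - real (fib (n+2) - y)\<bar> < 1/2) \<longleftrightarrow> (\<exists>k::int. \<bar>k*phi^2 - y\<bar> < 1/2)"
  proof
    assume "\<exists>k::int. \<bar>k*phi^2 - real (fib (n+2) - y)\<bar> < 1/2"
    then obtain k' :: int where k': "\<bar>k'*phi^2 - real (fib (n+2) - y)\<bar> < 1/2" by blast
    have "\<bar>(int (fib n) - k')*phi^2 - y + psi^n\<bar> < 1/2" using k' eq2[of k'] by (metis abs_minus_cancel)
    hence "\<bar>(int (fib n) - k')*phi^2 - y\<bar> < 1/2" using refl_core[OF n2 y1 yG] by blast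
    then show "\<exists>k::int. \<bar>k*phi^2 - y\<bar> < 1/2" by blast
  next
    assume "\<exists>k::int. \<bar>k*phi^2 - y\<bar> < 1/2"
    then obtain k :: int where k: "\<bar>k*phi^2 - y\<bar> < 1/2" by blast
    hence "\<bar>k*phi^2 - y + psi^n\<bar> < 1/2" using refl_core[OF n2 y1 yG] by blast
    hence "\<bar>(int (fib n) - k)*phi^2 - real (fib (n+2) - y)\<bar> < 1/2" using eq[of k] by (metis abs_minus_cancel)
    then show "\<exists>k::int. \<bar>k*phi^2 - real (fib (n+2) - y)\<bar> < 1/2" by blast
  qed
  then show ?thesis using near[OF m1] near[OF y1] by simp
qed

lemma bset_fib: assumes "j \<ge> 2" shows "bset (fib (j+2))"
proof -
  have f: "real (fib (j+2)) = phi^2 * fib j + psi^j" by (rule fib_shift)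
  have "\<bar>psi\<bar>^j \<le> \<bar>psi\<bar>^2" using assms psi_bounds by (intro power_decreasing) auto
  moreover have "\<bar>psi\<bar>^2 < 1/2" using psi_sq psi_bounds by (simp add: power_abs[symmetric])
  ultimately have "\<bar>psi^j\<bar> < 1/2" by (simp add: power_abs)
  hence "\<bar>real_of_int (int (fib j))*phi^2 - real (fib (j+2))\<bar> < 1/2" using f by (simp add: algebra_simps)
  moreover have "fib (j+2) \<ge> 1" by (rule fib_pos_ge1) simp
  ultimately show "bset (fib (j+2))" using near by blast
qed

lemma bset_12: "\<not> bset 1" "\<not> bset 2"
proof -
  have pp2: "phi^2 > 2618/1000" using phi_sq phi_bounds by simp
  have "\<bar>k*phi^2 - m\<bar> \<ge> 1/2" if "m = 1 \<or> m = 2" for k :: int and m :: real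
  proof (cases "k \<ge> 1")
    case True
    hence "k*phi^2 \<ge> 1*phi^2" using pp2 by (intro mult_right_mono) auto
    then show ?thesis using that pp2 by auto
  next
    case False
    hence "real_of_int k \<le> 0" by simp
    hence "k*phi^2 \<le> 0" using pp2 by (simp add: mult_nonpos_nonneg)
    then show ?thesis using that by auto
  qed
  hence "\<not> (\<exists>k::int. \<bar>k*phi^2 - real m\<bar> < 1/2)" if "m = 1 \<or> m = 2" for m :: nat
    using that by (metis not_less of_nat_1 of_nat_numeral)
  from this[of 1] this[of 2] show "\<not> bset 1" "\<not> bset 2" using near[of 1] near[of 2] by simp_all
qed



declare A105774.simps[simp del]
abbreviation "a \<equiv> A105774"

lemma fidx_eq: assumes "j \<ge> 2" "fib j < n" "n \<le> fib (Suc j)" shows "fidx n = j"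
proof -
  define P where "P i \<longleftrightarrow> fib (Suc (Suc i)) < n \<and> n \<le> fib (Suc (Suc (Suc i)))" for i
  obtain i0 where j: "j = Suc (Suc i0)" using assms(1) by (metis add_2_eq_Suc le_Suc_ex)
  have P0: "P i0" unfolding P_def using assms j by simp
  have uniq: "i = i0" if "P i" for i
  proof (rule ccontr)
    assume "i \<noteq> i0"
    then consider "i < i0" | "i0 < i" by linarith
    then show False
    proof cases
      case 1
      hence "fib (Suc (Suc (Suc i))) \<le> fib (Suc (Suc i0))" by (intro fib_mono) simp
      then show False using that P0 unfolding P_def by simp
    next
      case 2
      hence "fib (Suc (Suc (Suc i0))) \<le> fib (Suc (Suc i))" by (intro fib_mono) simp
      then show False using that P0 unfolding P_def by simp
    qed
  qed
  have "(THE i. P i) = i0" using P0 uniq by (rule the_equality)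
  then show ?thesis unfolding fidx_def P_def[symmetric] using j by simp
qed

lemma a_rec: assumes "j \<ge> 2" "fib j < n" "n \<le> fib (Suc j)"
  shows "a n = fib (Suc j) - a (n - fib j)"
proof -
  have "n \<ge> 2" using assms fib_pos_ge1[of j] by linarith
  then show ?thesis using fidx_eq[OF assms] A105774.simps[of n] by simp
qed

lemma a0: "a 0 = 0" by (simp add: A105774.simps)
lemma a1: "a 1 = 1" by (simp add: A105774.simps)

lemma suc_le_fib: "Suc n \<le> fib (n+3)"
proof (induction n)
  case 0 then show ?case by (simp add: numeral_3_eq_3)
next
  case (Suc n)
  have e1: "Suc n + 3 = (n+2)+2" "n+3 = (n+2)+1" by simp_all
  have "fib (Suc n + 3) = fib (n+3) + fib (n+2)" unfolding e1 by (rule fib_plus_2)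
  moreover have "fib (n+2) \<ge> 1" by (rule fib_pos_ge1) simp
  ultimately show ?case using Suc by simp
qed

lemma block_img: assumes N3: "N \<ge> 3"
  shows "a ` {fib (N+1) + 1 .. fib (N+2)} = (\<lambda>v. fib (N+2) - v) ` (a ` {1..fib N})"
proof -
  have F: "fib (N+2) = fib (N+1) + fib N" by (rule fib_plus_2)
  have "a ` {fib (N+1) + 1 .. fib (N+2)} = (\<lambda>i. a (i + fib (N+1))) ` {1..fib N}"
  proof -
    have "{fib (N+1) + 1 .. fib (N+2)} = (\<lambda>i. i + fib (N+1)) ` {1..fib N}"
      unfolding F by (auto simp: image_iff intro!: bexI[of _ "x - fib (N+1)" for x])
    then show ?thesis by (simp only: image_image)
  qed
  also have "\<dots> = (\<lambda>i. fib (N+2) - a i) ` {1..fib N}"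
  proof (rule image_cong[OF refl])
    fix i assume i: "i \<in> {1..fib N}"
    have "a (i + fib (N+1)) = fib (Suc (N+1)) - a (i + fib (N+1) - fib (N+1))"
      using i N3 F by (intro a_rec) auto
    then show "a (i + fib (N+1)) = fib (N+2) - a i" by simp
  qed
  finally show ?thesis by (simp add: image_image)
qed

lemma main_sets: assumes "N \<ge> 3"
  shows "a ` {1..fib N} = {m. 1 \<le> m \<and> m < fib N \<and> \<not> bset m}
       \<and> a ` {1..fib (N+1)} = {m. 1 \<le> m \<and> m < fib (N+1) \<and> \<not> bset m}"
  using assms
proof (induction N rule: dec_induct)
  case base
  have a2: "a 2 = 1" using a_rec[of 2 2] a1 by (simp add: numeral_3_eq_3)
  have a3: "a 3 = 2" using a_rec[of 3 3] a1 by (simp add: numeral_3_eq_3)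
  have f3: "fib 3 = 2" by (simp add: numeral_3_eq_3)
  have f4: "fib 4 = 3" by (simp add: numeral_eq_Suc)
  have s1: "{1..2::nat} = {1,2}" by auto
  have s2: "{1..3::nat} = {1,2,3}" by auto
  have r1: "{m. 1 \<le> m \<and> m < (2::nat) \<and> \<not> bset m} = {1}" using bset_12 by auto
  have r2: "{m. 1 \<le> m \<and> m < (3::nat) \<and> \<not> bset m} = {1,2}" using bset_12 by (auto simp: less_Suc_eq)
  show ?case using a1 a2 a3 s1 s2 r1 r2 f3 f4 by simp
next
  case (step N)
  have IH1: "a ` {1..fib N} = {m. 1 \<le> m \<and> m < fib N \<and> \<not> bset m}" using step by blast
  have IH2: "a ` {1..fib (N+1)} = {m. 1 \<le> m \<and> m < fib (N+1) \<and> \<not> bset m}" using step by blast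
  have F: "fib (N+2) = fib (N+1) + fib N" by (rule fib_plus_2)
  have fN1: "fib N \<ge> 1" by (rule fib_pos_ge1) (use step in simp)
  have "{1..fib (N+2)} = {1..fib (N+1)} \<union> {fib (N+1) + 1 .. fib (N+2)}" using F by auto
  hence "a ` {1..fib (N+2)} = a ` {1..fib (N+1)} \<union> (\<lambda>v. fib (N+2) - v) ` (a ` {1..fib N})"
    using block_img[OF step(1)] by (simp add: image_Un)
  also have "(\<lambda>v. fib (N+2) - v) ` (a ` {1..fib N}) = {m. fib (N+1) < m \<and> m < fib (N+2) \<and> \<not> bset m}"
  proof
    show "(\<lambda>v. fib (N+2) - v) ` (a ` {1..fib N}) \<subseteq> {m. fib (N+1) < m \<and> m < fib (N+2) \<and> \<not> bset m}"
    proof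
      fix m assume "m \<in> (\<lambda>v. fib (N+2) - v) ` (a ` {1..fib N})"
      then obtain v where v: "1 \<le> v" "v < fib N" "\<not> bset v" "m = fib (N+2) - v" unfolding IH1 by auto
      have "bset (fib (N+2) - v) \<longleftrightarrow> bset v" using reflect[of N v] step(1) v by simp
      then show "m \<in> {m. fib (N+1) < m \<and> m < fib (N+2) \<and> \<not> bset m}" using v F by auto
    qed
  next
    show "{m. fib (N+1) < m \<and> m < fib (N+2) \<and> \<not> bset m} \<subseteq> (\<lambda>v. fib (N+2) - v) ` (a ` {1..fib N})"
    proof
      fix m assume m: "m \<in> {m. fib (N+1) < m \<and> m < fib (N+2) \<and> \<not> bset m}"
      define v where "v = fib (N+2) - m"
      have v: "1 \<le> v" "v < fib N" "m = fib (N+2) - v" using m F unfolding v_def by auto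
      have "bset (fib (N+2) - v) \<longleftrightarrow> bset v" using reflect[of N v] step(1) v by simp
      hence "\<not> bset v" using m v by simp
      hence "v \<in> a ` {1..fib N}" unfolding IH1 using v by simp
      then show "m \<in> (\<lambda>v. fib (N+2) - v) ` (a ` {1..fib N})" using v by blast
    qed
  qed
  also have "a ` {1..fib (N+1)} \<union> {m. fib (N+1) < m \<and> m < fib (N+2) \<and> \<not> bset m}
      = {m. 1 \<le> m \<and> m < fib (N+2) \<and> \<not> bset m}"
  proof -
    obtain j where j: "N + 1 = j + 2" "j \<ge> 2" using step(1) by (intro that[of "N - 1"]) auto
    have "bset (fib (N+1))" using bset_fib[OF j(2)] j(1) by simp
    moreover have "fib (N+1) \<ge> 1" by (rule fib_pos_ge1) simp
    ultimately show ?thesis unfolding IH2 using F by (auto simp: not_less_iff_gr_or_eq)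
  qed
  finally show ?case using IH2 by (simp add: add.commute)
qed

theorem proposition5:
  fixes m :: nat
  assumes "m \<ge> 1"
  shows "(\<nexists>n. A105774 n = m) \<longleftrightarrow>
         (\<exists>k::nat. k \<ge> 1 \<and> int m = \<lfloor>phi ^ 2 * real k + 1/2\<rfloor>)"
proof -
  have "(\<nexists>n. a n = m) \<longleftrightarrow> bset m"
  proof
    assume h: "\<nexists>n. a n = m"
    show "bset m"
    proof (rule ccontr)
      assume nb: "\<not> bset m"
      have "m < fib (m+3)" using suc_le_fib[of m] by simp
      hence "m \<in> a ` {1..fib (m+3)}" using main_sets[of "m+3"] nb assms by simp
      then show False using h by blast
    qed
  next
    assume b: "bset m"
    show "\<nexists>n. a n = m"
    proof
      assume "\<exists>n. a n = m"
      then obtain n where n: "a n = m" by blast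
      have "n \<noteq> 0"
      proof
        assume "n = 0" then have "m = 0" using n a0 by simp
        then show False using assms by simp
      qed
      moreover have "n \<le> fib (n+3)" using suc_le_fib[of n] by simp
      ultimately have "a n \<in> a ` {1..fib (n+3)}" by simp
      hence "\<not> bset (a n)" using main_sets[of "n+3"] by simp
      then show False using n b by simp
    qed
  qed
  then show ?thesis unfolding bset_def by simp
qed

end
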